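(* Let $\delta\in\{0,1\}$ and let $b,\ell,u$ be nonnegative integers. There exists a set $\mathfrak{B}$ of integer $2\times3$ matrices which is the disjoint union of two subsets $\mathfrak{B}'$ and $\mathfrak{B}''$ with $|\mathfrak{B}'|=2\ell$ and $|\mathfrak{B}''|=2u$, such that $\sigma_r(M)=(0,0)$ and $\sigma_c(M)=(-2,1,1)$ for all $M\in\mathfrak{B}'$, $\sigma_r(M)=(0,0)$ and $\sigma_c(M)=(-4,2,2)$ for all $M\in\mathfrak{B}''$, and the multiset of absolute values of all entries of all matrices in $\mathfrak{B}$ is exactly the set $$[2b+1,2b+8u+8\ell-1]_2\cup[2b+8u+8\ell+\delta,2b+12u+12\ell+\delta-1]\cup[4b+12u+12\ell+\delta,4b+16u+16\ell+\delta-1]$$ (each element occurring once).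
   Context: For integers $a\equiv b\pmod d$ with $d\geqslant1$, $[a,b]_d=\{a+id: 0\leqslant i\leqslant (b-a)/d\}$ if $a\leqslant b$ and $[a,b]_d=\varnothing$ if $a>b$; $[a,b]=[a,b]_1$. For a matrix $M$, $\sigma_r(M)$ is the sequence of its row sums and $\sigma_c(M)$ the sequence of its column sums. *)

theory Defs
  imports "Jordan_Normal_Form.Matrix" "HOL-Library.Multiset"
begin

definition step_interval :: "int \<Rightarrow> int \<Rightarrow> int \<Rightarrow> int set" where
  "step_interval a b d = (if a \<le> b then {a + i * d | i. 0 \<le> i \<and> i \<le> (b - a) div d} else {})"

definition row_sums :: "int mat \<Rightarrow> int list" where
  "row_sums M = map (\<lambda>i. \<Sum>j<dim_col M. M $$ (i, j)) [0..<dim_row M]"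

definition col_sums :: "int mat \<Rightarrow> int list" where
  "col_sums M = map (\<lambda>j. \<Sum>i<dim_row M. M $$ (i, j)) [0..<dim_col M]"

definition abs_entries :: "int mat \<Rightarrow> int multiset" where
  "abs_entries M = image_mset (\<lambda>(i, j). \<bar>M $$ (i, j)\<bar>)
                     (mset_set ({0..<dim_row M} \<times> {0..<dim_col M}))"

end

theory Submission
  imports Defs
begin

definition Oo :: "nat \<Rightarrow> int \<Rightarrow> int" where "Oo b j = 2*int b + 1 + 2*j"
definition Mm :: "nat \<Rightarrow> int \<Rightarrow> int \<Rightarrow> int \<Rightarrow> int" where
  "Mm b d n j = 2*int b + 12*n + d - 1 - j"
definition Hh :: "nat \<Rightarrow> int \<Rightarrow> int \<Rightarrow> int \<Rightarrow> int" where
  "Hh b d n j = Oo b j + Mm b d n j"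
definition FF :: "nat \<Rightarrow> int \<Rightarrow> int \<Rightarrow> int \<Rightarrow> int multiset" where
  "FF b d n j = {#Oo b j, Mm b d n j, Hh b d n j#}"
definition GG :: "nat \<Rightarrow> int \<Rightarrow> int \<Rightarrow> int \<Rightarrow> int \<Rightarrow> int mat" where
  "GG b d n j c = mat 2 3 (\<lambda>(r,k). if r = 0 then
      (if k = 0 then Oo b j else if k = 1 then - Hh b d n j else Mm b d n j)
    else (if k = 0 then -2*c - Oo b j else if k = 1 then c + Hh b d n j else c - Mm b d n j))"

lemma GG_carrier: "GG b d n j c \<in> carrier_mat 2 3"
  by (simp add: GG_def)

lemma GG_00: "GG b d n j c $$ (0,0) = Oo b j"
  by (simp add: GG_def)

lemma GG_inj: "GG b d n j c = GG b d n j' c' \<Longrightarrow> j = j'"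
  by (metis GG_00 Oo_def add_left_cancel mult_left_cancel zero_neq_numeral)

lemma inj42: "(s::nat) < 2 \<Longrightarrow> s' < 2 \<Longrightarrow> (a::int) + 4*int t + 2*int s = a + 4*int t' + 2*int s' \<Longrightarrow> t = t' \<and> s = s'"
  by presburger

lemma inj41: "(s::nat) < 2 \<Longrightarrow> s' < 2 \<Longrightarrow> 4*int t + int s = 4*int t' + int s' \<Longrightarrow> t = t' \<and> s = s'"
  by presburger

lemma three: "{..<3::nat} = {0,1,2}" by auto
lemma two: "{..<2::nat} = {0,1}" by auto

lemma GG_rows: "row_sums (GG b d n j c) = [0,0]"
  by (simp add: row_sums_def GG_def three Hh_def upt_rec)

lemma GG_cols: "col_sums (GG b d n j c) = [-2*c, c, c]"
  by (simp add: col_sums_def GG_def two Hh_def upt_rec)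

lemma abs_entries_23:
  assumes "M \<in> carrier_mat 2 3"
  shows "abs_entries M = {#\<bar>M$$(0,0)\<bar>, \<bar>M$$(0,1)\<bar>, \<bar>M$$(0,2)\<bar>,
                          \<bar>M$$(1,0)\<bar>, \<bar>M$$(1,1)\<bar>, \<bar>M$$(1,2)\<bar>#}"
proof -
  have "{0..<2} \<times> {0..<3} = set [(0::nat,0::nat),(0,1),(0,2),(1,0),(1,1),(1,2)]" by auto
  then have "mset_set ({0..<2} \<times> {0..<3}) = mset [(0::nat,0::nat),(0,1),(0,2),(1,0),(1,1),(1,2)]"
    by (simp only: mset_set_set) (simp add: mset_set_set)
  then show ?thesis using assms by (simp add: abs_entries_def add_mset_commute)
qed

lemma GG_abs:
  assumes "0 \<le> j" "c \<ge> 0" "j + c < 4*n" "d \<ge> 0"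
  shows "abs_entries (GG b d n j c) = FF b d n j + FF b d n (j+c)"
proof -
  have "abs_entries (GG b d n j c) = {#Oo b j, Hh b d n j, Mm b d n j,
     Oo b (j+c), Hh b d n (j+c), Mm b d n (j+c)#}"
    unfolding abs_entries_23[OF GG_carrier]
    using assms by (simp add: GG_def Hh_def Oo_def Mm_def algebra_simps)
  then show ?thesis by (simp add: FF_def add_mset_commute)
qed

lemma block_sum:
  "(\<Sum>t<k. FF b d n (a + 4*int t) + FF b d n (a + 4*int t + 1) + FF b d n (a + 4*int t + 2)
      + FF b d n (a + 4*int t + 3)) = (\<Sum>j<4*k. FF b d n (a + int j))"
proof (induction k)
  case 0 then show ?case by simp
next
  case (Suc k)
  have e: "4 * Suc k = Suc (Suc (Suc (Suc (4*k))))" by simp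
  show ?case using Suc by (simp only: e sum.lessThan_Suc) (simp add: algebra_simps)
qed

lemma split_sum:
  "(\<Sum>j<p. f (int j)) + (\<Sum>j<q. f (int p + int j)) = (\<Sum>j<p+q. f (int j))"
  by (induction q) (auto simp: algebra_simps)

lemma sum_singles:
  "finite J \<Longrightarrow> (\<Sum>j\<in>J. {#f j#}) = image_mset f (mset_set J)"
  by (induction J rule: finite_induct) auto

lemma imgO: "(\<lambda>j. 2*int b+1+2*int j) ` {..<4*k} = step_interval (2*int b+1) (2*int b + 8*int k - 1) 2"
proof (cases "k = 0")
  case True then show ?thesis by (simp add: step_interval_def)
next
  case False
  have d: "(2*int b + 8*int k - 1 - (2*int b+1)) div 2 = 4*int k - 1" by presburger
  have le: "2*int b+1 \<le> 2*int b + 8*int k - 1" using False by simp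
  show ?thesis unfolding step_interval_def d if_P[OF le]
  proof (intro equalityI subsetI)
    fix x assume "x \<in> (\<lambda>j. 2*int b+1+2*int j) ` {..<4*k}"
    then obtain j where "j < 4*k" "x = 2*int b+1+2*int j" by auto
    then show "x \<in> {2*int b+1 + i*2 |i. 0 \<le> i \<and> i \<le> 4*int k - 1}"
      by (intro CollectI exI[where x="int j"]) auto
  next
    fix x assume "x \<in> {2*int b+1 + i*2 |i. 0 \<le> i \<and> i \<le> 4*int k - 1}"
    then obtain i where "0 \<le> i" "i \<le> 4*int k - 1" "x = 2*int b + 1 + i*2" by auto
    then show "x \<in> (\<lambda>j. 2*int b+1+2*int j) ` {..<4*k}"
      by (intro image_eqI[where x="nat i"]) auto
  qed
qed
lemma imgD: "(\<lambda>j. c - int j) ` {..<m} = {c - int m + 1 .. c}"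
proof (intro equalityI subsetI)
  fix x assume "x \<in> {c - int m + 1 .. c}"
  then show "x \<in> (\<lambda>j. c - int j) ` {..<m}" by (intro image_eqI[where x="nat (c - x)"]) auto
qed auto
lemma imgU: "(\<lambda>j. c + int j) ` {..<m} = {c .. c + int m - 1}"
proof (intro equalityI subsetI)
  fix x assume "x \<in> {c .. c + int m - 1}"
  then show "x \<in> (\<lambda>j. c + int j) ` {..<m}" by (intro image_eqI[where x="nat (x - c)"]) auto
qed auto

theorem lemma2p4:
  fixes \<delta> :: int and b l u :: nat
  assumes "\<delta> \<in> {0, 1}"
  shows "\<exists>B B' B'' :: int mat set.
     finite B' \<and> finite B'' \<and> B = B' \<union> B'' \<and> B' \<inter> B'' = {} \<and>
     card B' = 2 * l \<and> card B'' = 2 * u \<and>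
     (\<forall>M\<in>B. M \<in> carrier_mat 2 3) \<and>
     (\<forall>M\<in>B'. row_sums M = [0, 0] \<and> col_sums M = [-2, 1, 1]) \<and>
     (\<forall>M\<in>B''. row_sums M = [0, 0] \<and> col_sums M = [-4, 2, 2]) \<and>
     (\<Sum>M\<in>B. abs_entries M) = mset_set
        (step_interval (2*int b + 1) (2*int b + 8*int u + 8*int l - 1) 2
         \<union> {2*int b + 8*int u + 8*int l + \<delta> .. 2*int b + 12*int u + 12*int l + \<delta> - 1}
         \<union> {4*int b + 12*int u + 12*int l + \<delta> .. 4*int b + 16*int u + 16*int l + \<delta> - 1})"
proof -
  define n :: int where "n = int u + int l"
  have d0: "\<delta> \<ge> 0" using assms by auto
  define P where "P = {..<l} \<times> {..<2::nat}"
  define Q where "Q = {..<u} \<times> {..<2::nat}"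
  define g1 where "g1 = (\<lambda>(t::nat,s::nat). GG b \<delta> n (4*int u + 4*int t + 2*int s) 1)"
  define g2 where "g2 = (\<lambda>(t::nat,s::nat). GG b \<delta> n (4*int t + int s) 2)"
  define B' where "B' = g1 ` P"
  define B'' where "B'' = g2 ` Q"
  have inj1: "inj_on g1 P"
  proof (rule inj_onI)
    fix p q assume pq: "p \<in> P" "q \<in> P" "g1 p = g1 q"
    obtain t s t' s' where e: "p=(t,s)" "q=(t',s')" by fastforce
    have "s<2" "s'<2" "4*int u+4*int t+2*int s = 4*int u+4*int t'+2*int s'"
      using pq e by (auto simp: P_def g1_def dest: GG_inj)
    then show "p = q" using e inj42 by blast
  qed
  have inj2: "inj_on g2 Q"
  proof (rule inj_onI)
    fix p q assume pq: "p \<in> Q" "q \<in> Q" "g2 p = g2 q"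
    obtain t s t' s' where e: "p=(t,s)" "q=(t',s')" by fastforce
    have "s<2" "s'<2" "4*int t+int s = 4*int t'+int s'"
      using pq e by (auto simp: Q_def g2_def dest: GG_inj)
    then show "p = q" using e inj41 by blast
  qed
  have fin: "finite B'" "finite B''" by (simp_all add: B'_def B''_def P_def Q_def)
  have disj: "B' \<inter> B'' = {}"
    unfolding B'_def B''_def g1_def g2_def P_def Q_def by (auto dest!: GG_inj)
  have c1: "card B' = 2*l" using inj1 by (simp add: B'_def card_image P_def)
  have c2: "card B'' = 2*u" using inj2 by (simp add: B''_def card_image Q_def)
  have car: "\<forall>M\<in>B' \<union> B''. M \<in> carrier_mat 2 3"
    by (auto simp: B'_def B''_def g1_def g2_def GG_carrier)
  have rc1: "\<forall>M\<in>B'. row_sums M = [0, 0] \<and> col_sums M = [-2, 1, 1]"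
    by (auto simp: B'_def g1_def GG_rows GG_cols)
  have rc2: "\<forall>M\<in>B''. row_sums M = [0, 0] \<and> col_sums M = [-4, 2, 2]"
    by (auto simp: B''_def g2_def GG_rows GG_cols)
  have S1: "(\<Sum>M\<in>B'. abs_entries M) = (\<Sum>j<4*l. FF b \<delta> n (4*int u + int j))"
  proof -
    have "(\<Sum>M\<in>B'. abs_entries M) = (\<Sum>p\<in>P. abs_entries (g1 p))"
      using inj1 by (simp add: B'_def sum.reindex)
    also have "\<dots> = (\<Sum>t<l. \<Sum>s<2. abs_entries (g1 (t,s)))"
      by (simp add: P_def sum.cartesian_product)
    also have "\<dots> = (\<Sum>t<l. FF b \<delta> n (4*int u + 4*int t) + FF b \<delta> n (4*int u + 4*int t + 1)
       + FF b \<delta> n (4*int u + 4*int t + 2) + FF b \<delta> n (4*int u + 4*int t + 3))"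
    proof (rule sum.cong[OF refl])
      fix t assume "t \<in> {..<l}"
      then have "4*int u + 4*int t + 2 + 1 < 4*n" by (simp add: n_def)
      then show "(\<Sum>s<2. abs_entries (g1 (t,s))) = FF b \<delta> n (4*int u + 4*int t) + FF b \<delta> n (4*int u + 4*int t + 1)
       + FF b \<delta> n (4*int u + 4*int t + 2) + FF b \<delta> n (4*int u + 4*int t + 3)"
        using d0 by (simp add: two g1_def GG_abs add.assoc)
    qed
    also have "\<dots> = (\<Sum>j<4*l. FF b \<delta> n (4*int u + int j))" by (rule block_sum)
    finally show ?thesis .
  qed
  have S2: "(\<Sum>M\<in>B''. abs_entries M) = (\<Sum>j<4*u. FF b \<delta> n (int j))"
  proof -
    have "(\<Sum>M\<in>B''. abs_entries M) = (\<Sum>p\<in>Q. abs_entries (g2 p))"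
      using inj2 by (simp add: B''_def sum.reindex)
    also have "\<dots> = (\<Sum>t<u. \<Sum>s<2. abs_entries (g2 (t,s)))"
      by (simp add: Q_def sum.cartesian_product)
    also have "\<dots> = (\<Sum>t<u. FF b \<delta> n (0 + 4*int t) + FF b \<delta> n (0 + 4*int t + 1)
       + FF b \<delta> n (0 + 4*int t + 2) + FF b \<delta> n (0 + 4*int t + 3))"
    proof (rule sum.cong[OF refl])
      fix t assume "t \<in> {..<u}"
      then have "4*int t + 1 + 2 < 4*n" by (simp add: n_def)
      then show "(\<Sum>s<2. abs_entries (g2 (t,s))) = FF b \<delta> n (0 + 4*int t) + FF b \<delta> n (0 + 4*int t + 1)
       + FF b \<delta> n (0 + 4*int t + 2) + FF b \<delta> n (0 + 4*int t + 3)"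
        using d0 by (simp add: two g2_def GG_abs add_ac)
    qed
    also have "\<dots> = (\<Sum>j<4*u. FF b \<delta> n (0 + int j))" by (rule block_sum)
    finally show ?thesis by simp
  qed
  define N where "N = 4*u + 4*l"
  have Stot: "(\<Sum>M\<in>B' \<union> B''. abs_entries M) = (\<Sum>j<N. FF b \<delta> n (int j))"
    using fin disj S1 S2 split_sum[of "\<lambda>j. FF b \<delta> n j" "4*u" "4*l"]
    by (simp add: sum.union_disjoint N_def add.commute)
  let ?J = "{..<N}"
  have "(\<Sum>j<N. FF b \<delta> n (int j)) = (\<Sum>j\<in>?J. {#Oo b (int j)#}) + (\<Sum>j\<in>?J. {#Mm b \<delta> n (int j)#})
      + (\<Sum>j\<in>?J. {#Hh b \<delta> n (int j)#})"
    by (simp add: FF_def sum.distrib[symmetric] add_mset_commute)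
  also have "\<dots> = mset_set ((\<lambda>j. Oo b (int j)) ` ?J) + mset_set ((\<lambda>j. Mm b \<delta> n (int j)) ` ?J)
      + mset_set ((\<lambda>j. Hh b \<delta> n (int j)) ` ?J)"
    by (simp add: sum_singles image_mset_mset_set inj_on_def Oo_def Mm_def Hh_def)
  also have "\<dots> = mset_set ((\<lambda>j. Oo b (int j)) ` ?J \<union> (\<lambda>j. Mm b \<delta> n (int j)) ` ?J
      \<union> (\<lambda>j. Hh b \<delta> n (int j)) ` ?J)"
  proof -
    have a: "(\<lambda>j. Oo b (int j)) ` ?J \<inter> (\<lambda>j. Mm b \<delta> n (int j)) ` ?J = {}"
      using d0 by (auto simp: Oo_def Mm_def N_def n_def)
    have c: "((\<lambda>j. Oo b (int j)) ` ?J \<union> (\<lambda>j. Mm b \<delta> n (int j)) ` ?J) \<inter> (\<lambda>j. Hh b \<delta> n (int j)) ` ?J = {}"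
      using d0 by (auto simp: Oo_def Mm_def Hh_def N_def n_def)
    show ?thesis by (simp add: mset_set_Union[symmetric] a c)
  qed
  also have "(\<lambda>j. Oo b (int j)) ` ?J = step_interval (2*int b + 1) (2*int b + 8*int u + 8*int l - 1) 2"
  proof -
    have "(\<lambda>j. Oo b (int j)) = (\<lambda>j. 2*int b+1+2*int j)" by (simp add: Oo_def fun_eq_iff)
    moreover have "N = 4*(u+l)" by (simp add: N_def)
    ultimately show ?thesis using imgO[of b "u+l"] by (simp add: Oo_def algebra_simps)
  qed
  also have "(\<lambda>j. Mm b \<delta> n (int j)) ` ?J = {2*int b + 8*int u + 8*int l + \<delta> .. 2*int b + 12*int u + 12*int l + \<delta> - 1}"
  proof -
    have "(\<lambda>j. Mm b \<delta> n (int j)) = (\<lambda>j. (2*int b + 12*n + \<delta> - 1) - int j)" by (simp add: Mm_def fun_eq_iff)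
    then show ?thesis using imgD[of "2*int b + 12*n + \<delta> - 1" N] by (simp add: N_def n_def Mm_def Hh_def Oo_def algebra_simps)
  qed
  also have "(\<lambda>j. Hh b \<delta> n (int j)) ` ?J = {4*int b + 12*int u + 12*int l + \<delta> .. 4*int b + 16*int u + 16*int l + \<delta> - 1}"
  proof -
    have "(\<lambda>j. Hh b \<delta> n (int j)) = (\<lambda>j. (4*int b + 12*n + \<delta>) + int j)" by (simp add: Hh_def Oo_def Mm_def fun_eq_iff)
    then show ?thesis using imgU[of "4*int b + 12*n + \<delta>" N] by (simp add: N_def n_def Mm_def Hh_def Oo_def algebra_simps)
  qed
  finally have E: "(\<Sum>j<N. FF b \<delta> n (int j)) = mset_set
        (step_interval (2*int b + 1) (2*int b + 8*int u + 8*int l - 1) 2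
         \<union> {2*int b + 8*int u + 8*int l + \<delta> .. 2*int b + 12*int u + 12*int l + \<delta> - 1}
         \<union> {4*int b + 12*int u + 12*int l + \<delta> .. 4*int b + 16*int u + 16*int l + \<delta> - 1})" .
  show ?thesis
    apply (rule exI[of _ "B' \<union> B''"])
    apply (rule exI[of _ B'])
    apply (rule exI[of _ B''])
    apply (intro conjI)
    apply (rule fin(1))
    apply (rule fin(2))
    apply (rule refl)
    apply (rule disj)
    apply (rule c1)
    apply (rule c2)
    apply (rule car)
    apply (rule rc1)
    apply (rule rc2)
    apply (rule trans[OF Stot E])
    done
qed

end
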